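(* In the setting of the context, with $\alpha_k=\frac a{b+k}$, $a>0$, $b>1$, $\frac ab\le\frac1{2M\tilde L}$, put $s=a\sigma_{\min}^2$. For $n\ge1$ let $S_n=\sum_{i=1}^nq(\alpha_{i-1})B_i^{(n)}$. If $s<2$, there is a constant $K$ independent of $n$ with $S_n\le K(b+n)^{-s}$ for all $n\ge1$. If $s>2$, there is a constant $K$ independent of $n$ with $S_n\le K(b+n)^{-2}$ for all $n\ge1$.
   Context: Standing setting: $M\ge N$, $A\in\mathbb{R}^{M\times N}$ of full column rank with rows $a_1,\dots,a_M$, right-hand side $(b_1,\dots,b_M)$, $F(x)=\frac12\|Ax-(b_1,\dots,b_M)^\top\|^2$ with unique minimizer $x_*$; singular values $\sigma_1\ge\dots\ge\sigma_N>0$, $\sigma_{\max}=\sigma_1$, $\sigma_{\min}=\sigma_N$, $c(A)=\sigma_{\max}^2/\sigma_{\min}^2$, $\tilde L=\max_i\|a_i\|^2$, $f_i(x)=\frac M2(\langle a_i,x\rangle-b_i)^2$, $\sigma^2=\frac1M\sum_i\|\nabla f_i(x_* )\|^2$. Fix $\ell$. For $\alpha>0$: $A(\alpha)=1-2\alpha\sigma_\ell^2$, $B(\alpha)=\alpha^2M\tilde Lc(A)\sigma_{\max}^2$, $p(\alpha)=1-\alpha\sigma_{\min}^2$, $q(\alpha)=2\alpha^2\sigma^2$. For fixed $n$ and $0\le k\le n$: $B_k^{(n)}=\sum_{j=k}^n\Big(\prod_{i=j+1}^nA(\alpha_i)\Big)B(\alpha_j)\Big(\prod_{i=k}^{j-1}p(\alpha_i)\Big)$.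 (Step-size scalars $a,b$ are unrelated to $a_i,b_i$.) *)

theory Defs
  imports "Jordan_Normal_Form.Char_Poly" "HOL-Library.Multiset"
begin

definition sq_sing_vals :: "real mat \<Rightarrow> real list" where
  "sq_sing_vals A = rev (sorted_list_of_multiset (proots (char_poly (transpose_mat A * A))))"

(* k-th singular value, 1 \<le> k \<le> N, sigma_1 \<ge> ... \<ge> sigma_N *)
definition sing_val :: "real mat \<Rightarrow> nat \<Rightarrow> real" where
  "sing_val A k = sqrt (sq_sing_vals A ! (k - 1))"

definition sigma_max :: "real mat \<Rightarrow> real" where
  "sigma_max A = sing_val A 1"

definition sigma_min :: "real mat \<Rightarrow> real" where
  "sigma_min A = sing_val A (dim_col A)"

definition cond_num :: "real mat \<Rightarrow> real" where
  "cond_num A = (sigma_max A)^2 / (sigma_min A)^2"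

definition sqnorm :: "real vec \<Rightarrow> real" where
  "sqnorm v = v \<bullet> v"

definition Ltil :: "real mat \<Rightarrow> real" where
  "Ltil A = Max {sqnorm (row A i) | i. i < dim_row A}"

definition LS_obj :: "real mat \<Rightarrow> real vec \<Rightarrow> real vec \<Rightarrow> real" where
  "LS_obj A bv x = sqnorm (A *\<^sub>v x - bv) / 2"

definition x_star :: "real mat \<Rightarrow> real vec \<Rightarrow> real vec" where
  "x_star A bv = (THE x. x \<in> carrier_vec (dim_col A) \<and>
      (\<forall>y \<in> carrier_vec (dim_col A). LS_obj A bv x \<le> LS_obj A bv y))"

(* gradient of f_i(x) = M/2 (<a_i,x> - b_i)^2 *)
definition grad_fi :: "real mat \<Rightarrow> real vec \<Rightarrow> nat \<Rightarrow> real vec \<Rightarrow> real vec" where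
  "grad_fi A bv i x = (real (dim_row A) * (row A i \<bullet> x - bv $ i)) \<cdot>\<^sub>v row A i"

definition noise_var :: "real mat \<Rightarrow> real vec \<Rightarrow> real" where
  "noise_var A bv = (\<Sum>i<dim_row A. sqnorm (grad_fi A bv i (x_star A bv))) / real (dim_row A)"

definition Afac :: "real mat \<Rightarrow> nat \<Rightarrow> real \<Rightarrow> real" where
  "Afac A l \<alpha> = 1 - 2 * \<alpha> * (sing_val A l)^2"

definition Bfac :: "real mat \<Rightarrow> real \<Rightarrow> real" where
  "Bfac A \<alpha> = \<alpha>^2 * real (dim_row A) * Ltil A * cond_num A * (sigma_max A)^2"

definition pfac :: "real mat \<Rightarrow> real \<Rightarrow> real" where
  "pfac A \<alpha> = 1 - \<alpha> * (sigma_min A)^2"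

definition qfac :: "real mat \<Rightarrow> real vec \<Rightarrow> real \<Rightarrow> real" where
  "qfac A bv \<alpha> = 2 * \<alpha>^2 * noise_var A bv"

definition Bkn :: "real mat \<Rightarrow> nat \<Rightarrow> (nat \<Rightarrow> real) \<Rightarrow> nat \<Rightarrow> nat \<Rightarrow> real" where
  "Bkn A l \<alpha> n k = (\<Sum>j=k..n. (\<Prod>i=j+1..n. Afac A l (\<alpha> i)) * Bfac A (\<alpha> j)
                                 * (\<Prod>i=k..<j. pfac A (\<alpha> i)))"

definition Sn :: "real mat \<Rightarrow> real vec \<Rightarrow> nat \<Rightarrow> (nat \<Rightarrow> real) \<Rightarrow> nat \<Rightarrow> real" where
  "Sn A bv l \<alpha> n = (\<Sum>i=1..n. qfac A bv (\<alpha> (i - 1)) * Bkn A l \<alpha> n i)"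

end

theory Submission
  imports Defs
begin


lemma l16_CS_sum:
  fixes a b :: "nat \<Rightarrow> real"
  shows "(\<Sum>i\<in>I. a i * b i)^2 \<le> (\<Sum>i\<in>I. (a i)^2) * (\<Sum>i\<in>I. (b i)^2)"
proof -
  have "0 \<le> (\<Sum>i\<in>I. \<Sum>j\<in>I. (a i * b j - a j * b i)^2)" by (intro sum_nonneg) auto
  also have "\<dots> = (\<Sum>i\<in>I. \<Sum>j\<in>I. (a i)^2 * (b j)^2 + (a j)^2 * (b i)^2 - 2 * ((a i * b i) * (a j * b j)))"
    by (intro sum.cong refl) (simp add: power2_eq_square algebra_simps)
  also have "\<dots> = (\<Sum>i\<in>I. \<Sum>j\<in>I. (a i)^2 * (b j)^2) + (\<Sum>i\<in>I. \<Sum>j\<in>I. (a j)^2 * (b i)^2)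
       - 2 * (\<Sum>i\<in>I. \<Sum>j\<in>I. (a i * b i) * (a j * b j))"
    by (simp add: sum_subtractf sum.distrib sum_distrib_left)
  also have "(\<Sum>i\<in>I. \<Sum>j\<in>I. (a i)^2 * (b j)^2) = (\<Sum>i\<in>I. (a i)^2) * (\<Sum>i\<in>I. (b i)^2)"
    by (simp add: sum_product)
  also have "(\<Sum>i\<in>I. \<Sum>j\<in>I. (a j)^2 * (b i)^2) = (\<Sum>i\<in>I. (a i)^2) * (\<Sum>i\<in>I. (b i)^2)"
    apply (subst sum.swap) by (simp add: sum_product)
  also have "(\<Sum>i\<in>I. \<Sum>j\<in>I. (a i * b i) * (a j * b j)) = (\<Sum>i\<in>I. a i * b i)^2"
    by (simp add: sum_product power2_eq_square)
  finally show ?thesis by simp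
qed

lemma l16_eig_real:
  fixes A :: "real mat"
  assumes A: "A \<in> carrier_mat M N"
  and ev: "eigenvector (map_mat complex_of_real (transpose_mat A * A)) v c"
  shows "c = complex_of_real (Re c) \<and> 0 \<le> Re c \<and> Re c \<le> (\<Sum>k<M. sqnorm (row A k))"
proof -
  let ?S = "transpose_mat A * A"
  let ?Sc = "map_mat complex_of_real ?S"
  have S: "?S \<in> carrier_mat N N" using A by auto
  from ev[unfolded eigenvector_def] S have v: "v \<in> carrier_vec N" "v \<noteq> 0\<^sub>v N" "?Sc *\<^sub>v v = c \<cdot>\<^sub>v v" by auto
  define w where "w k = (\<Sum>j<N. complex_of_real (A $$ (k,j)) * v $ j)" for k
  have Sij: "?S $$ (i,j) = (\<Sum>k<M. A $$ (k,i) * A $$ (k,j))" if "i < N" "j < N" for i j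
    using A that by (simp add: scalar_prod_def atLeast0LessThan)
  have eqi: "(\<Sum>j<N. complex_of_real (\<Sum>k<M. A $$ (k,i) * A $$ (k,j)) * v $ j) = c * v $ i" if i: "i < N" for i
  proof -
    have h: "(?Sc *\<^sub>v v) $ i = (c \<cdot>\<^sub>v v) $ i" using v by simp
    have "(?Sc *\<^sub>v v) $ i = (\<Sum>j<N. complex_of_real (?S $$ (i,j)) * v $ j)"
    proof -
      have "(?Sc *\<^sub>v v) $ i = row ?Sc i \<bullet> v" using i A by (intro index_mult_mat_vec) simp
      also have "\<dots> = (\<Sum>j=0..<N. ?Sc $$ (i,j) * v $ j)" unfolding scalar_prod_def
        using v(1) i S by (intro sum.cong) auto
      also have "\<dots> = (\<Sum>j<N. complex_of_real (?S $$ (i,j)) * v $ j)"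
        using i A by (simp add: atLeast0LessThan)
      finally show ?thesis .
    qed
    then show ?thesis using h i v(1) S by (simp add: Sij)
  qed
  have "(\<Sum>i<N. cnj (v $ i) * (c * v $ i)) = (\<Sum>i<N. cnj (v $ i) * (\<Sum>j<N. complex_of_real (\<Sum>k<M. A $$ (k,i) * A $$ (k,j)) * v $ j))"
    using eqi by simp
  also have "\<dots> = (\<Sum>i<N. \<Sum>j<N. \<Sum>k<M. cnj (v $ i) * complex_of_real (A $$ (k,i)) * complex_of_real (A $$ (k,j)) * v $ j)"
    by (simp add: sum_distrib_left sum_distrib_right mult.assoc)
  also have "\<dots> = (\<Sum>i<N. \<Sum>k<M. \<Sum>j<N. cnj (v $ i) * complex_of_real (A $$ (k,i)) * complex_of_real (A $$ (k,j)) * v $ j)"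
    by (rule sum.cong[OF refl], rule sum.swap)
  also have "\<dots> = (\<Sum>k<M. \<Sum>i<N. \<Sum>j<N. cnj (v $ i) * complex_of_real (A $$ (k,i)) * complex_of_real (A $$ (k,j)) * v $ j)"
    by (rule sum.swap)
  also have "\<dots> = (\<Sum>k<M. cnj (w k) * w k)"
    by (simp add: w_def sum_product cnj_sum mult.assoc mult.left_commute)
  finally have key: "(\<Sum>k<M. cnj (w k) * w k) = c * (\<Sum>i<N. cnj (v $ i) * v $ i)"
    by (simp add: sum_distrib_left mult.left_commute)
  define V where "V = (\<Sum>i<N. (cmod (v $ i))^2)"
  define W where "W = (\<Sum>k<M. (cmod (w k))^2)"
  have cz: "cnj z * z = complex_of_real ((cmod z)^2)" for z :: complex
    by (metis complex_norm_square mult.commute)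
  have key2: "complex_of_real W = c * complex_of_real V"
    using key by (simp add: cz V_def W_def)
  obtain i0 where i0: "i0 < N" "v $ i0 \<noteq> 0" using v(1,2) by (metis eq_vecI carrier_vecD index_zero_vec(1,2))
  have "0 < (cmod (v $ i0))^2" using i0 by simp
  also have "\<dots> \<le> V" unfolding V_def using i0 by (intro member_le_sum) auto
  finally have Vpos: "V > 0" .
  have c: "c = complex_of_real (W / V)" using key2 Vpos
    by (simp add: field_simps)
  have W0: "0 \<le> W" unfolding W_def by (intro sum_nonneg) auto
  have wk: "(cmod (w k))^2 \<le> (\<Sum>j<N. (A $$ (k,j))^2) * V" for k
  proof -
    have "cmod (w k) \<le> (\<Sum>j<N. \<bar>A $$ (k,j)\<bar> * cmod (v $ j))"
      unfolding w_def by (rule order_trans[OF norm_sum]) (simp add: norm_mult)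
    then have "(cmod (w k))^2 \<le> (\<Sum>j<N. \<bar>A $$ (k,j)\<bar> * cmod (v $ j))^2"
      by (intro power_mono) auto
    also have "\<dots> \<le> (\<Sum>j<N. (\<bar>A $$ (k,j)\<bar>)^2) * (\<Sum>j<N. (cmod (v $ j))^2)"
      by (rule l16_CS_sum)
    finally show ?thesis by (simp add: V_def)
  qed
  have "W \<le> (\<Sum>k<M. (\<Sum>j<N. (A $$ (k,j))^2) * V)" unfolding W_def by (intro sum_mono wk)
  also have "\<dots> = (\<Sum>k<M. sqnorm (row A k)) * V"
    unfolding sum_distrib_right[symmetric]
  proof (intro arg_cong2[where f="(*)"] refl sum.cong)
    fix k assume k: "k \<in> {..<M}"
    show "(\<Sum>j<N. (A $$ (k,j))^2) = sqnorm (row A k)"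
      unfolding sqnorm_def scalar_prod_def using A k by (simp add: atLeast0LessThan power2_eq_square)
  qed
  finally have "W / V \<le> (\<Sum>k<M. sqnorm (row A k))" using Vpos by (simp add: divide_le_eq)
  then show ?thesis using c W0 Vpos by simp
qed
interpretation ofr: map_poly_inj_idom_hom "complex_of_real" ..

lemma l16_mset_sum_list_single: "(\<Sum>x\<leftarrow>xs. {#x#}) = mset xs"
  by (induction xs) auto

lemma l16_proots_lin: "proots (\<Prod>r\<leftarrow>rs. [:- r, 1:]) = mset (rs::real list)"
proof (induction rs)
  case Nil then show ?case by simp
next
  case (Cons a rs)
  have nz: "(\<Prod>r\<leftarrow>rs. [:- r, 1:]) \<noteq> (0::real poly)"
    by (subst prod_list_zero_iff) auto
  have "(\<Prod>r\<leftarrow>a # rs. [:- r, 1:]) = [:- a, 1:] * (\<Prod>r\<leftarrow>rs. [:- r, 1:])" by simp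
  then have "proots (\<Prod>r\<leftarrow>a # rs. [:- r, 1:]) = proots [:- a, 1:] + proots (\<Prod>r\<leftarrow>rs. [:- r, 1:])"
    using proots_mult[of "[:- a, 1:]" "\<Prod>r\<leftarrow>rs. [:- r, 1:]"] nz by simp
  also have "\<dots> = {#a#} + mset rs" using Cons.IH proots_linear_factor[of "-a"] by simp
  finally show ?case by simp
qed

lemma l16_spec:
  fixes A :: "real mat"
  assumes A: "A \<in> carrier_mat M N" and l: "1 \<le> l" "l \<le> N"
  shows "0 \<le> (sigma_min A)^2 \<and> (sigma_min A)^2 \<le> (sing_val A l)^2 \<and>
    (sing_val A l)^2 \<le> (sigma_max A)^2 \<and> (sigma_max A)^2 \<le> (\<Sum>k<M. sqnorm (row A k))"
proof -
  let ?S = "transpose_mat A * A"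
  let ?Sc = "map_mat complex_of_real ?S"
  define T where "T = (\<Sum>k<M. sqnorm (row A k))"
  have S: "?S \<in> carrier_mat N N" using A by auto
  have Sc: "?Sc \<in> carrier_mat N N" using S by auto
  from char_poly_factorized[OF Sc] obtain cs where
    cs: "char_poly ?Sc = (\<Prod>a\<leftarrow>cs. [:- a, 1:])" "length cs = N" by blast
  have csprop: "c = complex_of_real (Re c) \<and> 0 \<le> Re c \<and> Re c \<le> T" if c: "c \<in> set cs" for c
  proof -
    have "poly (char_poly ?Sc) c = 0" unfolding cs(1) using c
      by (induction cs) (auto simp: poly_prod_list)
    then have "eigenvalue ?Sc c" using eigenvalue_root_char_poly[OF Sc] by simp
    then obtain v where "eigenvector ?Sc v c" unfolding eigenvalue_def by blast
    from l16_eig_real[OF A this] show ?thesis unfolding T_def .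
  qed
  define rs where "rs = map Re cs"
  have csrs: "cs = map complex_of_real rs" unfolding rs_def using csprop
    by (induction cs) auto
  have "map_poly complex_of_real (char_poly ?S) = char_poly ?Sc"
    by (rule sym, rule of_real_hom.char_poly_hom[OF S])
  also have "\<dots> = map_poly complex_of_real (\<Prod>r\<leftarrow>rs. [:- r, 1:])"
    unfolding cs(1) csrs ofr.hom_prod_list by (simp add: o_def)
  finally have cp: "char_poly ?S = (\<Prod>r\<leftarrow>rs. [:- r, 1:])" by simp
  have pr: "proots (char_poly ?S) = mset rs"
    unfolding cp by (rule l16_proots_lin)
  define L where "L = rev (sort rs)"
  have sq: "sq_sing_vals A = L" unfolding sq_sing_vals_def pr L_def by simp
  have lenL: "length L = N" unfolding L_def rs_def using cs(2) by simp
  have setL: "0 \<le> x \<and> x \<le> T" if "x \<in> set L" for x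
    using that csprop unfolding L_def rs_def by auto
  have mono: "L ! j \<le> L ! i" if "i \<le> j" "j < N" for i j
  proof -
    have "L ! i = sort rs ! (N - Suc i)" "L ! j = sort rs ! (N - Suc j)"
      unfolding L_def using that lenL by (auto simp: rev_nth L_def)
    moreover have "sort rs ! (N - Suc j) \<le> sort rs ! (N - Suc i)"
      by (rule sorted_nth_mono) (use that lenL in \<open>auto simp: L_def\<close>)
    ultimately show ?thesis by simp
  qed
  have sv: "(sing_val A k)^2 = L ! (k - 1)" if "1 \<le> k" "k \<le> N" for k
  proof -
    have "L ! (k - 1) \<in> set L" using that lenL by auto
    then have "0 \<le> L ! (k - 1)" using setL by blast
    then show ?thesis unfolding sing_val_def sq by simp
  qed
  have dc: "dim_col A = N" using A by simp
  have N: "1 \<le> N" using l by simp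
  have "L ! 0 \<in> set L" "L ! (N - 1) \<in> set L" using lenL N by auto
  then show ?thesis
    unfolding sigma_min_def sigma_max_def dc sv[OF l] sv[OF order.refl N] sv[OF N order.refl]
    using setL mono l N T_def by auto
qed



lemma l16_step_ineq:
  fixes x c :: real assumes x: "x > 0" and c: "c \<ge> 0"
  shows "x powr (-c) * (1 - c / x) \<le> (x + 1) powr (-c)"
proof -
  have "1 - c / x \<le> exp (- c / x)" using exp_ge_add_one_self[of "-c/x"] by simp
  also have "\<dots> \<le> exp (- c * ln (1 + 1 / x))"
  proof -
    have "ln (1 + 1/x) \<le> 1/x" using x by (intro ln_add_one_self_le_self) simp
    then have "c * ln (1 + 1/x) \<le> c / x" using c by (metis mult_left_mono divide_inverse mult.commute mult_1 times_divide_eq_right)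
    then show ?thesis by simp
  qed
  also have "\<dots> = ((x + 1) / x) powr (-c)"
    using x by (simp add: powr_def field_simps)
  also have "\<dots> = (x + 1) powr (-c) / x powr (-c)" by (rule powr_divide)
  finally have "1 - c / x \<le> (x + 1) powr (-c) / x powr (-c)" .
  then show ?thesis using x by (simp add: field_simps mult.commute)
qed

lemma l16_prod_bound:
  fixes a b k :: real
  assumes a: "a > 0" and b: "b > 0" and k: "k \<ge> 0"
    and nn: "\<And>t. 0 \<le> 1 - a / (b + real t) * k"
  shows "(\<Prod>t\<in>{u..<u+m}. 1 - a / (b + real t) * k) \<le> (b + real u) powr (a*k) * (b + real (u+m)) powr (-(a*k))"
proof (induction m)
  case 0
  have "(b + real u) powr (a*k) * (b + real u) powr (-(a*k)) = 1"
    using b by (simp add: powr_minus)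
  then show ?case by simp
next
  case (Suc m)
  let ?v = "u + m"
  have "(\<Prod>t\<in>{u..<u+Suc m}. 1 - a / (b + real t) * k) = (\<Prod>t\<in>{u..<u+m}. 1 - a / (b + real t) * k) * (1 - a / (b + real ?v) * k)"
    by simp
  also have "\<dots> \<le> ((b + real u) powr (a*k) * (b + real ?v) powr (-(a*k))) * (1 - a / (b + real ?v) * k)"
    by (intro mult_right_mono Suc.IH nn)
  also have "\<dots> = (b + real u) powr (a*k) * ((b + real ?v) powr (-(a*k)) * (1 - (a*k) / (b + real ?v)))"
    by simp
  also have "\<dots> \<le> (b + real u) powr (a*k) * ((b + real ?v + 1) powr (-(a*k)))"
    using a b k by (intro mult_left_mono l16_step_ineq) auto
  also have "\<dots> = (b + real u) powr (a*k) * (b + real (u + Suc m)) powr (-(a*k))"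
    by (simp add: algebra_simps)
  finally show ?case .
qed

lemma l16_tele_step:
  fixes x r :: real assumes x: "x > 0" and r: "r \<noteq> 0" "r \<le> 1"
  shows "(x + 1) powr (r - 1) \<le> ((x + 1) powr r - x powr r) / r"
proof -
  obtain z where z: "x < z" "z < x + 1" "(x + 1) powr r - x powr r = (x + 1 - x) * (r * z powr (r - 1))"
  proof -
    have der: "\<And>y. x \<le> y \<Longrightarrow> y \<le> x + 1 \<Longrightarrow> ((\<lambda>z. z powr r) has_real_derivative r * y powr (r - 1)) (at y)"
      using x by (intro has_real_derivative_powr) auto
    have "\<exists>z. x < z \<and> z < x + 1 \<and> (x + 1) powr r - x powr r = (x + 1 - x) * (r * z powr (r - 1))"
      by (rule MVT2) (use der in auto)
    then show ?thesis using that by blast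
  qed
  have "(x + 1) powr (r - 1) \<le> z powr (r - 1)" using z x r by (intro powr_mono2') auto
  also have "\<dots> = ((x + 1) powr r - x powr r) / r" using z(3) r by simp
  finally show ?thesis .
qed

lemma l16_tele_sum:
  fixes b r :: real assumes b: "b > 0" and r: "r \<noteq> 0" "r \<le> 1"
  shows "(\<Sum>i=1..n. (b + real i) powr (r - 1)) \<le> ((b + real n) powr r - b powr r) / r"
proof (induction n)
  case 0 then show ?case by simp
next
  case (Suc n)
  have "(\<Sum>i=1..Suc n. (b + real i) powr (r - 1)) = (\<Sum>i=1..n. (b + real i) powr (r - 1)) + (b + real n + 1) powr (r - 1)"
    by (simp add: algebra_simps)
  also have "\<dots> \<le> ((b + real n) powr r - b powr r) / r + ((b + real n + 1) powr r - (b + real n) powr r) / r"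
    using b r by (intro add_mono Suc.IH l16_tele_step) auto
  also have "\<dots> = ((b + real (Suc n)) powr r - b powr r) / r"
    by (simp add: diff_divide_distrib add_ac)
  finally show ?case .
qed

lemma l16_powr_m2: "x > 0 \<Longrightarrow> x powr (-2) = 1 / x^2" for x :: real
  by (simp add: powr_minus powr_numeral divide_inverse)

lemma l16_prod4_mono:
  fixes x1 x2 x3 x4 y1 y2 y3 y4 :: real
  assumes "0 \<le> x1" "x1 \<le> y1" "0 \<le> x2" "x2 \<le> y2" "0 \<le> x3" "x3 \<le> y3" "0 \<le> x4" "x4 \<le> y4"
  shows "x1 * x2 * x3 * x4 \<le> y1 * y2 * y3 * y4"
  using assms by (intro mult_mono) (auto intro: mult_nonneg_nonneg order_trans)

lemma l16_term_bound:
  fixes a b lam mu sig2 C :: real and n i j :: nat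
  assumes a: "a > 0" and b: "b > 1" and mu: "0 \<le> mu" and ml: "mu \<le> lam" and al: "a / b * lam \<le> 1/2"
    and sig: "sig2 \<ge> 0" and C: "C \<ge> 0" and ij: "1 \<le> i" "i \<le> j" "j \<le> n"
  shows "(2 * (a / (b + real (i - 1)))^2 * sig2) * ((\<Prod>t=j+1..n. 1 - 2 * (a / (b + real t)) * lam) * ((a / (b + real j))^2 * C) * (\<Prod>t=i..<j. 1 - (a / (b + real t)) * mu))
    \<le> (8 * sig2 * C * a^4 * 4 powr (a*mu)) * (b + real n) powr (-2*(a*mu)) * ((b + real i) powr (a*mu - 2) * (b + real j) powr (a*mu - 2))"
proof -
  define s where "s = a * mu"
  have s0: "s \<ge> 0" using a mu by (simp add: s_def)
  have lam0: "lam \<ge> 0" using mu ml by simp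
  have alt: "a / (b + real t) * lam \<le> 1/2" for t
  proof -
    have "a / (b + real t) \<le> a / b" using a b by (intro divide_left_mono) auto
    then have "a / (b + real t) * lam \<le> a / b * lam" using lam0 by (intro mult_right_mono)
    then show ?thesis using al by linarith
  qed
  have altm: "a / (b + real t) * mu \<le> a / (b + real t) * lam" for t
    using ml a b by (intro mult_left_mono) auto
  have h3: "0 \<le> 1 - a / (b + real t) * (2*mu)" for t using alt[of t] altm[of t] by linarith
  have h4: "0 \<le> 1 - a / (b + real t) * mu" for t using alt[of t] altm[of t] by linarith
  define u where "u = b + real i"
  define v where "v = b + real j"
  define P where "P = (b + real n) powr (-2*s)"
  have u: "u > 1" "u \<ge> 2" using b ij unfolding u_def by auto
  have v: "v > 1" using b unfolding v_def by auto
  have q1: "2 * (a / (b + real (i - 1)))^2 * sig2 \<le> 8 * a^2 * sig2 * u powr (-2)"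
  proof -
    have bi: "b + real (i - 1) = u - 1" using ij unfolding u_def by (simp add: of_nat_diff)
    have "u - 1 \<ge> u / 2" using u by simp
    then have "(u/2)^2 \<le> (u - 1)^2" using u by (intro power_mono) auto
    then have "1 / (u - 1)^2 \<le> 1 / (u/2)^2" using u by (intro divide_left_mono) auto
    also have "\<dots> = 4 * u powr (-2)" using u by (simp add: l16_powr_m2 power_divide)
    finally have "1 / (u - 1)^2 \<le> 4 * u powr (-2)" .
    then have "2 * a^2 * sig2 * (1 / (u - 1)^2) \<le> 2 * a^2 * sig2 * (4 * u powr (-2))"
      using sig by (intro mult_left_mono) auto
    then show ?thesis unfolding bi by (simp add: power_divide)
  qed
  have pA0: "0 \<le> (\<Prod>t=j+1..n. 1 - 2 * (a / (b + real t)) * lam)"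
    using alt by (intro prod_nonneg) (auto simp: algebra_simps)
  have pA: "(\<Prod>t=j+1..n. 1 - 2 * (a / (b + real t)) * lam) \<le> 4 powr s * v powr (2*s) * P"
  proof -
    have "(\<Prod>t=j+1..n. 1 - 2 * (a / (b + real t)) * lam) \<le> (\<Prod>t\<in>{j+1..<(j+1)+(n-j)}. 1 - a / (b + real t) * (2*mu))"
    proof -
      have eq: "{j+1..<(j+1)+(n-j)} = {j+1..n}" using ij by auto
      have h1: "0 \<le> 1 - 2 * (a / (b + real t)) * lam" for t using alt[of t] by linarith
      have h2: "1 - 2 * (a / (b + real t)) * lam \<le> 1 - a / (b + real t) * (2*mu)" for t using altm[of t] by linarith
      show ?thesis unfolding eq using h1 h2
        by (intro prod_mono) auto
    qed
    also have "\<dots> \<le> (b + real (j+1)) powr (a*(2*mu)) * (b + real ((j+1)+(n-j))) powr (-(a*(2*mu)))"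
      using a b mu h3 by (intro l16_prod_bound) auto
    also have "\<dots> = (v + 1) powr (2*s) * (b + real n + 1) powr (-2*s)"
      using ij by (simp add: v_def s_def algebra_simps)
    also have "\<dots> \<le> (2 * v) powr (2*s) * (b + real n) powr (-2*s)"
      using v b s0 by (intro mult_mono powr_mono2 powr_mono2') auto
    also have "\<dots> = 4 powr s * v powr (2*s) * P"
      unfolding P_def powr_mult using powr_powr[of 2 2 s] by simp
    finally show ?thesis .
  qed
  have pp0: "0 \<le> (\<Prod>t=i..<j. 1 - (a / (b + real t)) * mu)"
    using h4 by (intro prod_nonneg) auto
  have pp: "(\<Prod>t=i..<j. 1 - (a / (b + real t)) * mu) \<le> u powr s * v powr (-s)"
  proof -
    have "(\<Prod>t=i..<j. 1 - (a / (b + real t)) * mu) = (\<Prod>t\<in>{i..<i+(j-i)}. 1 - a / (b + real t) * mu)"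
      using ij by simp
    also have "\<dots> \<le> (b + real i) powr (a*mu) * (b + real (i+(j-i))) powr (-(a*mu))"
      using a b mu h4 by (intro l16_prod_bound) auto
    also have "\<dots> = u powr s * v powr (-s)" using ij by (simp add: u_def v_def s_def)
    finally show ?thesis .
  qed
  have B: "(a / (b + real j))^2 * C = a^2 * C * v powr (-2)"
    using v by (simp add: l16_powr_m2 v_def power_divide)
  have "(2 * (a / (b + real (i - 1)))^2 * sig2) * ((\<Prod>t=j+1..n. 1 - 2 * (a / (b + real t)) * lam) * ((a / (b + real j))^2 * C) * (\<Prod>t=i..<j. 1 - (a / (b + real t)) * mu))
     = (2 * (a / (b + real (i - 1)))^2 * sig2) * (\<Prod>t=j+1..n. 1 - 2 * (a / (b + real t)) * lam) * ((a / (b + real j))^2 * C) * (\<Prod>t=i..<j. 1 - (a / (b + real t)) * mu)"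
    by (simp add: mult.assoc)
  also have "\<dots> \<le> (8 * a^2 * sig2 * u powr (-2)) * (4 powr s * v powr (2*s) * P) * (a^2 * C * v powr (-2)) * (u powr s * v powr (-s))"
    unfolding B using q1 pA pp pA0 pp0 sig C by (intro l16_prod4_mono) auto
  also have "\<dots> = (8 * sig2 * C * a^4 * 4 powr s) * P * ((u powr s * u powr (-2)) * (v powr (2*s) * v powr (-2) * v powr (-s)))"
    by (simp add: algebra_simps power_numeral_reduce)
  also have "(u powr s * u powr (-2)) = u powr (s - 2)" by (simp add: powr_add[symmetric])
  also have "(v powr (2*s) * v powr (-2) * v powr (-s)) = v powr (s - 2)" by (simp add: powr_add[symmetric])
  finally show ?thesis unfolding P_def u_def v_def s_def by simp
qed

lemma l16_sum_bound:
  fixes a b lam mu sig2 C :: real and n :: nat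
  assumes a: "a > 0" and b: "b > 1" and mu: "0 \<le> mu" and ml: "mu \<le> lam" and al: "a / b * lam \<le> 1/2"
    and sig: "sig2 \<ge> 0" and C: "C \<ge> 0"
  shows "(\<Sum>i=1..n. (2 * (a / (b + real (i - 1)))^2 * sig2) * (\<Sum>j=i..n. (\<Prod>t=j+1..n. 1 - 2 * (a / (b + real t)) * lam) * ((a / (b + real j))^2 * C) * (\<Prod>t=i..<j. 1 - (a / (b + real t)) * mu)))
    \<le> (8 * sig2 * C * a^4 * 4 powr (a*mu)) * (b + real n) powr (-2*(a*mu)) * (\<Sum>i=1..n. (b + real i) powr (a*mu - 2))^2"
proof -
  define D where "D = (8 * sig2 * C * a^4 * 4 powr (a*mu)) * (b + real n) powr (-2*(a*mu))"
  define f where "f i = (b + real i) powr (a*mu - 2)" for i :: nat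
  have D0: "D \<ge> 0" unfolding D_def using sig C a by simp
  have "(\<Sum>i=1..n. (2 * (a / (b + real (i - 1)))^2 * sig2) * (\<Sum>j=i..n. (\<Prod>t=j+1..n. 1 - 2 * (a / (b + real t)) * lam) * ((a / (b + real j))^2 * C) * (\<Prod>t=i..<j. 1 - (a / (b + real t)) * mu)))
     = (\<Sum>i=1..n. \<Sum>j=i..n. (2 * (a / (b + real (i - 1)))^2 * sig2) * ((\<Prod>t=j+1..n. 1 - 2 * (a / (b + real t)) * lam) * ((a / (b + real j))^2 * C) * (\<Prod>t=i..<j. 1 - (a / (b + real t)) * mu)))"
    by (simp add: sum_distrib_left)
  also have "\<dots> \<le> (\<Sum>i=1..n. \<Sum>j=i..n. D * (f i * f j))"
  proof (rule sum_mono, rule sum_mono)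
    fix i j assume i: "i \<in> {1..n}" and j: "j \<in> {i..n}"
    show "(2 * (a / (b + real (i - 1)))^2 * sig2) * ((\<Prod>t=j+1..n. 1 - 2 * (a / (b + real t)) * lam) * ((a / (b + real j))^2 * C) * (\<Prod>t=i..<j. 1 - (a / (b + real t)) * mu)) \<le> D * (f i * f j)"
      unfolding D_def f_def using i j by (intro l16_term_bound[OF a b mu ml al sig C]) auto
  qed
  also have "\<dots> \<le> (\<Sum>i=1..n. \<Sum>j=1..n. D * (f i * f j))"
  proof (rule sum_mono)
    fix i assume i: "i \<in> {1..n}"
    show "(\<Sum>j=i..n. D * (f i * f j)) \<le> (\<Sum>j=1..n. D * (f i * f j))"
      using i D0 by (intro sum_mono2) (auto simp: f_def)
  qed
  also have "\<dots> = D * ((\<Sum>i=1..n. f i) * (\<Sum>i=1..n. f i))"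
    by (subst sum_product) (simp add: sum_distrib_left)
  also have "\<dots> = D * (\<Sum>i=1..n. f i)^2"
    by (simp add: power2_eq_square)
  finally show ?thesis unfolding D_def f_def .
qed

lemma l16_final_cases:
  fixes S :: "nat \<Rightarrow> real" and b s D :: real
  assumes bd: "\<And>n. n \<ge> 1 \<Longrightarrow> S n \<le> D * (b + real n) powr (-2*s) * (\<Sum>i=1..n. (b + real i) powr (s - 2))^2"
    and D: "D \<ge> 0" and b: "b > 1" and s: "s \<ge> 0"
  shows "(s < 2 \<longrightarrow> (\<exists>K. \<forall>n\<ge>1. S n \<le> K * (b + real n) powr (-s)))
       \<and> (s > 2 \<longrightarrow> (\<exists>K. \<forall>n\<ge>1. S n \<le> K * (b + real n) powr (-2)))"
proof (intro conjI impI)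
  assume s2: "s < 2"
  show "\<exists>K. \<forall>n\<ge>1. S n \<le> K * (b + real n) powr (-s)"
  proof (cases "s = 0")
    case True
    show ?thesis
    proof (intro exI allI impI)
      fix n :: nat assume n: "n \<ge> 1"
      have "(\<Sum>i=1..n. (b + real i) powr (-1 - 1)) \<le> ((b + real n) powr (-1) - b powr (-1)) / (-1)"
        using b by (intro l16_tele_sum) auto
      also have "\<dots> \<le> 1"
      proof -
        have "inverse b \<le> 1" using b by (simp add: inverse_le_1_iff)
        moreover have "0 \<le> inverse (b + real n)" using b by simp
        ultimately have "inverse b - inverse (b + real n) \<le> 1" by linarith
        then show ?thesis using b by (simp add: powr_minus)
      qed
      finally have s1: "(\<Sum>i=1..n. (b + real i) powr (s - 2)) \<le> 1" using True by simp
      have s0: "0 \<le> (\<Sum>i=1..n. (b + real i) powr (s - 2))" by (intro sum_nonneg) auto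
      have "(\<Sum>i=1..n. (b + real i) powr (s - 2))^2 \<le> 1^2" using s0 s1 by (intro power_mono) auto
      moreover have "(b + real n) powr (-2*s) = 1" using True b by simp
      ultimately have "D * (b + real n) powr (-2*s) * (\<Sum>i=1..n. (b + real i) powr (s - 2))^2 \<le> D * 1 * 1"
        using D mult_left_mono[of "(\<Sum>i=1..n. (b + real i) powr (s - 2))^2" 1 D] by simp
      then have "S n \<le> D * 1 * 1" using bd[OF n] by linarith
      then show "S n \<le> D * (b + real n) powr (-s)" using True b by simp
    qed
  next
    case False
    then have sp: "s > 0" using s by simp
    show ?thesis
    proof (intro exI allI impI)
      fix n :: nat assume n: "n \<ge> 1"
      have "(\<Sum>i=1..n. (b + real i) powr (s - 2)) \<le> (\<Sum>i=1..n. (b + real i) powr (s/2 - 1))"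
        using b s2 by (intro sum_mono powr_mono) auto
      also have "\<dots> \<le> ((b + real n) powr (s/2) - b powr (s/2)) / (s/2)"
        using b sp s2 by (intro l16_tele_sum) auto
      also have "\<dots> \<le> (b + real n) powr (s/2) / (s/2)"
        using sp by (intro divide_right_mono) auto
      finally have s1: "(\<Sum>i=1..n. (b + real i) powr (s - 2)) \<le> (b + real n) powr (s/2) / (s/2)" .
      have s0: "0 \<le> (\<Sum>i=1..n. (b + real i) powr (s - 2))" by (intro sum_nonneg) auto
      have "(\<Sum>i=1..n. (b + real i) powr (s - 2))^2 \<le> ((b + real n) powr (s/2) / (s/2))^2"
        using s0 s1 by (intro power_mono) auto
      also have "\<dots> = (4 / s^2) * (b + real n) powr s"
        using b by (simp add: power_divide powr_powr[symmetric] power2_eq_square powr_add[symmetric])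
      finally have sq: "(\<Sum>i=1..n. (b + real i) powr (s - 2))^2 \<le> (4 / s^2) * (b + real n) powr s" .
      have "D * (b + real n) powr (-2*s) * (\<Sum>i=1..n. (b + real i) powr (s - 2))^2 \<le> D * (b + real n) powr (-2*s) * ((4 / s^2) * (b + real n) powr s)"
        using D by (intro mult_left_mono sq) simp
      then have "S n \<le> D * (b + real n) powr (-2*s) * ((4 / s^2) * (b + real n) powr s)"
        using bd[OF n] by linarith
      also have "\<dots> = (D * (4 / s^2)) * ((b + real n) powr (-2*s) * (b + real n) powr s)" by simp
      also have "(b + real n) powr (-2*s) * (b + real n) powr s = (b + real n) powr (-s)"
        by (simp add: powr_add[symmetric])
      finally show "S n \<le> (D * (4 / s^2)) * (b + real n) powr (-s)" .
    qed
  qed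
next
  assume s2: "s > 2"
  show "\<exists>K. \<forall>n\<ge>1. S n \<le> K * (b + real n) powr (-2)"
  proof (intro exI allI impI)
    fix n :: nat assume n: "n \<ge> 1"
    have "(\<Sum>i=1..n. (b + real i) powr (s - 2)) \<le> (\<Sum>i=1..n. (b + real n) powr (s - 2))"
      using b s2 by (intro sum_mono powr_mono2) auto
    also have "\<dots> = real n * (b + real n) powr (s - 2)" by simp
    also have "\<dots> \<le> (b + real n) * (b + real n) powr (s - 2)"
      using b by (intro mult_right_mono) auto
    also have "\<dots> = (b + real n) powr (s - 1)"
      using b powr_add[of "b + real n" 1 "s - 2"] by simp
    finally have s1: "(\<Sum>i=1..n. (b + real i) powr (s - 2)) \<le> (b + real n) powr (s - 1)" .
    have s0: "0 \<le> (\<Sum>i=1..n. (b + real i) powr (s - 2))" by (intro sum_nonneg) auto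
    have "(\<Sum>i=1..n. (b + real i) powr (s - 2))^2 \<le> ((b + real n) powr (s - 1))^2"
      using s0 s1 by (intro power_mono) auto
    also have "\<dots> = (b + real n) powr (2*s - 2)"
      by (simp add: power2_eq_square powr_add[symmetric])
    finally have sq: "(\<Sum>i=1..n. (b + real i) powr (s - 2))^2 \<le> (b + real n) powr (2*s - 2)" .
    have "D * (b + real n) powr (-2*s) * (\<Sum>i=1..n. (b + real i) powr (s - 2))^2 \<le> D * (b + real n) powr (-2*s) * ((b + real n) powr (2*s - 2))"
      using D by (intro mult_left_mono sq) simp
    then have "S n \<le> D * (b + real n) powr (-2*s) * ((b + real n) powr (2*s - 2))"
      using bd[OF n] by linarith
    also have "\<dots> = D * ((b + real n) powr (-2*s) * (b + real n) powr (2*s - 2))" by simp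
    also have "(b + real n) powr (-2*s) * (b + real n) powr (2*s - 2) = (b + real n) powr (-2)"
      by (simp add: powr_add[symmetric])
    finally show "S n \<le> D * (b + real n) powr (-2)" .
  qed
qed


theorem lemma16:
  fixes A :: "real mat" and bv :: "real vec" and M N l :: nat and a b :: real
  assumes dims: "A \<in> carrier_mat M N" "bv \<in> carrier_vec M"
    and MN: "N \<le> M" "0 < N"
    and full_rank: "\<forall>x \<in> carrier_vec N. A *\<^sub>v x = 0\<^sub>v M \<longrightarrow> x = 0\<^sub>v N"
    and l: "1 \<le> l" "l \<le> N"
    and ab: "a > 0" "b > 1" "a / b \<le> 1 / (2 * real M * Ltil A)"
  shows "(a * (sigma_min A)^2 < 2 \<longrightarrow>
            (\<exists>K. \<forall>n\<ge>1. Sn A bv l (\<lambda>k. a / (b + real k)) n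
                          \<le> K * (b + real n) powr (- (a * (sigma_min A)^2))))
       \<and> (a * (sigma_min A)^2 > 2 \<longrightarrow>
            (\<exists>K. \<forall>n\<ge>1. Sn A bv l (\<lambda>k. a / (b + real k)) n \<le> K * (b + real n) powr (-2)))"
proof -
  let ?s = "a * (sigma_min A)^2"
  define lam where "lam = (sing_val A l)^2"
  define mu where "mu = (sigma_min A)^2"
  define sig2 where "sig2 = noise_var A bv"
  define C where "C = real M * Ltil A * cond_num A * (sigma_max A)^2"
  have Mpos: "M > 0" using MN by simp
  have dr: "dim_row A = M" using dims by simp
  have sqn: "0 \<le> sqnorm v" for v :: "real vec"
    unfolding sqnorm_def scalar_prod_def by (intro sum_nonneg) auto
  have fin: "finite {sqnorm (row A i) | i. i < dim_row A}" by simp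
  have rowL: "sqnorm (row A k) \<le> Ltil A" if "k < M" for k
    unfolding Ltil_def using that dr by (intro Max_ge fin) auto
  have T: "(\<Sum>k<M. sqnorm (row A k)) \<le> real M * Ltil A"
  proof -
    have "(\<Sum>k<M. sqnorm (row A k)) \<le> (\<Sum>k<M. Ltil A)" by (intro sum_mono rowL) auto
    then show ?thesis by simp
  qed
  have abpos: "a / b > 0" using ab by simp
  then have MLp: "real M * Ltil A > 0" using ab(3)
  proof -
    have "1/(2*real M*Ltil A) > 0" using abpos ab(3) by linarith
    then have "2*real M*Ltil A > 0" by (simp add: zero_less_divide_1_iff)
    then have "2*(real M*Ltil A) > 0" by (simp only: mult.assoc)
    then show ?thesis by linarith
  qed
  from l16_spec[OF dims(1) l] have sp: "0 \<le> mu" "mu \<le> lam" "lam \<le> real M * Ltil A"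
    using T unfolding lam_def mu_def by auto
  have MLnn: "0 \<le> Ltil A * real M" using MLp by (metis less_eq_real_def mult.commute)
  have al: "a / b * lam \<le> 1/2"
  proof -
    have "a / b * lam \<le> 1 / (2 * real M * Ltil A) * (real M * Ltil A)"
      using ab(3) sp abpos MLp MLnn by (intro mult_mono) auto
    also have "\<dots> = 1/2"
    proof -
      have g: "\<And>x::real. x > 0 \<Longrightarrow> 1/(2*x)*x = 1/2" by simp
      have e: "2 * real M * Ltil A = 2 * (real M * Ltil A)" by (simp only: mult.assoc)
      show ?thesis unfolding e by (rule g[OF MLp])
    qed
    finally show ?thesis .
  qed
  have sig: "sig2 \<ge> 0" unfolding sig2_def noise_var_def by (intro divide_nonneg_nonneg sum_nonneg sqn) auto
  have cn: "cond_num A \<ge> 0" unfolding cond_num_def by simp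
  have C0: "C \<ge> 0" unfolding C_def using MLp cn by simp
  have a0: "a > 0" "b > 1" using ab by auto
  have Bf: "Bfac A x = x^2 * C" for x unfolding Bfac_def C_def dr by (simp add: mult.assoc)
  have Seq: "Sn A bv l (\<lambda>k. a / (b + real k)) n =
    (\<Sum>i=1..n. (2 * (a / (b + real (i - 1)))^2 * sig2) * (\<Sum>j=i..n. (\<Prod>t=j+1..n. 1 - 2 * (a / (b + real t)) * lam) * ((a / (b + real j))^2 * C) * (\<Prod>t=i..<j. 1 - (a / (b + real t)) * mu)))" for n
    unfolding lam_def mu_def sig2_def
    by (simp only: Sn_def Bkn_def qfac_def Afac_def pfac_def Bf)
  have bd: "Sn A bv l (\<lambda>k. a / (b + real k)) n \<le> (8 * sig2 * C * a^4 * 4 powr (a*mu)) * (b + real n) powr (-2*(a*mu)) * (\<Sum>i=1..n. (b + real i) powr (a*mu - 2))^2" if "n \<ge> 1" for n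
    unfolding Seq by (rule l16_sum_bound[OF a0 sp(1,2) al sig C0])
  have D0: "8 * sig2 * C * a^4 * 4 powr (a*mu) \<ge> 0" using sig C0 by simp
  have s0: "a * mu \<ge> 0" using a0 sp by simp
  from l16_final_cases[of "\<lambda>n. Sn A bv l (\<lambda>k. a / (b + real k)) n", OF bd D0 a0(2) s0]
  show ?thesis unfolding mu_def .
qed

end
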